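(* Let $N,S\ge 1$ and $d\ge 2$ be integers, and let $\pi$ be a next-token distribution on $[N]^S$ such that for every $t_{1:S}\in[N]^S$ there exists $t_{S+1}\in[N]$ with $\pi(t_{S+1}\mid t_{1:S})=1$ (i.e. all conditional distributions have zero entropy). Then $d_{KL}(\pi,\mathcal{L}(N,S,d))=0$.
   Context: $[N]=\{1,\dots,N\}$. A next-token distribution $\pi$ consists of a prior probability distribution on $[N]^S$ together with, for each $t_{1:S}\in[N]^S$, a conditional probability distribution $\pi_{t_{1:S}}=\pi(\cdot\mid t_{1:S})$ on $[N]$. For $f:[N]^S\to\mathbb{R}^N$, $d_{KL}(\pi,f):=\mathbb{E}_{t_{1:S}\sim\pi}\big[\mathrm{KL}(\pi_{t_{1:S}}\,\|\,\mathrm{Softmax}(f(t_{1:S})))\big]$. The set of sequence encoders is $\mathcal{L}(N,S,d):=\{f_{W,E}: W\in\mathbb{R}^{N\times d},\ E:[N]^S\to\mathbb{R}^d\}$ with $f_{W,E}(t_{1:S})=W E(t_{1:S})$, and $d_{KL}(\pi,\mathcal{L}(N,S,d)):=\inf_{f\in\mathcal{L}(N,S,d)}d_{KL}(\pi,f)$. *)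

theory Defs
  imports "HOL-Analysis.Analysis"
begin

definition seqs :: "nat \<Rightarrow> nat \<Rightarrow> nat list set" where
  "seqs N S = {t. length t = S \<and> set t \<subseteq> {1..N}}"

definition prob_vec :: "nat \<Rightarrow> (nat \<Rightarrow> real) \<Rightarrow> bool" where
  "prob_vec N P \<longleftrightarrow> (\<forall>i\<in>{1..N}. 0 \<le> P i) \<and> (\<Sum>i=1..N. P i) = 1"

text \<open>A next-token distribution: prior p on [N]^S and conditionals q t on [N].\<close>
definition next_token_dist :: "nat \<Rightarrow> nat \<Rightarrow> (nat list \<Rightarrow> real) \<Rightarrow> (nat list \<Rightarrow> nat \<Rightarrow> real) \<Rightarrow> bool" where
  "next_token_dist N S p q \<longleftrightarrow>
     (\<forall>t\<in>seqs N S. 0 \<le> p t) \<and> (\<Sum>t\<in>seqs N S. p t) = 1 \<and>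
     (\<forall>t\<in>seqs N S. prob_vec N (q t))"

definition softmax :: "nat \<Rightarrow> (nat \<Rightarrow> real) \<Rightarrow> nat \<Rightarrow> real" where
  "softmax N v i = exp (v i) / (\<Sum>j=1..N. exp (v j))"

definition KL :: "nat \<Rightarrow> (nat \<Rightarrow> real) \<Rightarrow> (nat \<Rightarrow> real) \<Rightarrow> real" where
  "KL N P Q = (\<Sum>i=1..N. if P i = 0 then 0 else P i * ln (P i / Q i))"

definition d_KL :: "nat \<Rightarrow> nat \<Rightarrow> (nat list \<Rightarrow> real) \<Rightarrow> (nat list \<Rightarrow> nat \<Rightarrow> real)
                     \<Rightarrow> (nat list \<Rightarrow> nat \<Rightarrow> real) \<Rightarrow> real" where
  "d_KL N S p q f = (\<Sum>t\<in>seqs N S. p t * KL N (q t) (softmax N (f t)))"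

text \<open>Sequence encoder f_{W,E}(t) = W E(t), W an N x d matrix, E : [N]^S -> R^d.\<close>
definition encoder :: "nat \<Rightarrow> (nat \<Rightarrow> nat \<Rightarrow> real) \<Rightarrow> (nat list \<Rightarrow> nat \<Rightarrow> real) \<Rightarrow> nat list \<Rightarrow> nat \<Rightarrow> real" where
  "encoder d W E t i = (\<Sum>k=1..d. W i k * E t k)"

definition d_KL_L :: "nat \<Rightarrow> nat \<Rightarrow> nat \<Rightarrow> (nat list \<Rightarrow> real) \<Rightarrow> (nat list \<Rightarrow> nat \<Rightarrow> real) \<Rightarrow> real" where
  "d_KL_L N S d p q = (INF WE \<in> (UNIV :: ((nat \<Rightarrow> nat \<Rightarrow> real) \<times> (nat list \<Rightarrow> nat \<Rightarrow> real)) set).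
                          d_KL N S p q (encoder d (fst WE) (snd WE)))"

end

theory Submission
  imports Defs
begin

lemma sum12:
  fixes f :: "nat \<Rightarrow> real"
  assumes "d \<ge> 2" and "\<And>k. k \<noteq> 1 \<Longrightarrow> k \<noteq> 2 \<Longrightarrow> f k = 0"
  shows "(\<Sum>k=1..d. f k) = f 1 + f 2"
proof -
  have "(\<Sum>k=1..d. f k) = (\<Sum>k\<in>{1,2}. f k)"
    using assms by (intro sum.mono_neutral_right) auto
  then show ?thesis by simp
qed

lemma point_mass:
  assumes "prob_vec N P" and "s \<in> {1..N}" and "P s = 1" and "i \<in> {1..N}" and "i \<noteq> s"
  shows "P i = 0"
proof -
  have nn: "\<forall>j\<in>{1..N}. 0 \<le> P j" and sm: "(\<Sum>j=1..N. P j) = 1" using assms(1) unfolding prob_vec_def by auto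
  have "(\<Sum>j=1..N. P j) = P s + (\<Sum>j\<in>{1..N}-{s}. P j)"
    using assms(2) by (simp add: sum.remove)
  also have "(\<Sum>j\<in>{1..N}-{s}. P j) = P i + (\<Sum>j\<in>{1..N}-{s}-{i}. P j)"
    using assms(4,5) by (subst sum.remove[of _ i]) auto
  finally have "P i + (\<Sum>j\<in>{1..N}-{s}-{i}. P j) = 0" using sm assms(3) by simp
  moreover have "(\<Sum>j\<in>{1..N}-{s}-{i}. P j) \<ge> 0" using nn by (intro sum_nonneg) auto
  moreover have "P i \<ge> 0" using nn assms(4) by auto
  ultimately show ?thesis by linarith
qed

lemma KL_point:
  assumes "prob_vec N P" and "s \<in> {1..N}" and "P s = 1"
  shows "KL N P Q = - ln (Q s)"
proof -
  have "KL N P Q = (\<Sum>i\<in>{1..N}. if i = s then - ln (Q s) else 0)"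
    unfolding KL_def
  proof (intro sum.cong refl)
    fix i assume i: "i \<in> {1..N}"
    show "(if P i = 0 then 0 else P i * ln (P i / Q i)) = (if i = s then - ln (Q s) else 0)"
      using point_mass[OF assms(1,2,3) i] assms(3) by (auto simp: ln_div ln_inverse divide_inverse)
  qed
  also have "\<dots> = - ln (Q s)" using assms(2) by simp
  finally show ?thesis .
qed

lemma softmax_le1:
  assumes "s \<in> {1..N}"
  shows "0 < softmax N v s" "softmax N v s \<le> 1"
proof -
  have pos: "(\<Sum>j=1..N. exp (v j)) > 0" using assms by (intro sum_pos) auto
  have "exp (v s) \<le> (\<Sum>j=1..N. exp (v j))"
    using assms by (intro member_le_sum) auto
  then show "softmax N v s \<le> 1" "0 < softmax N v s" using pos unfolding softmax_def by auto
qed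

theorem proposition3:
  fixes N S d :: nat and p :: "nat list \<Rightarrow> real" and q :: "nat list \<Rightarrow> nat \<Rightarrow> real"
  assumes "N \<ge> 1" and "S \<ge> 1" and "d \<ge> 2"
    and "next_token_dist N S p q"
    and "\<forall>t\<in>seqs N S. \<exists>s\<in>{1..N}. q t s = 1"
  shows "d_KL_L N S d p q = 0"
proof -
  define st where "st t = (SOME s. s \<in> {1..N} \<and> q t s = 1)" for t
  have st: "st t \<in> {1..N}" "q t (st t) = 1" if "t \<in> seqs N S" for t
  proof -
    have "\<exists>s. s \<in> {1..N} \<and> q t s = 1" using assms(5) that by blast
    from someI_ex[OF this] show "st t \<in> {1..N}" "q t (st t) = 1" unfolding st_def by blast+
  qed
  have pn: "\<forall>t\<in>seqs N S. 0 \<le> p t" "(\<Sum>t\<in>seqs N S. p t) = 1"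
    and pv: "\<And>t. t \<in> seqs N S \<Longrightarrow> prob_vec N (q t)"
    using assms(4) unfolding next_token_dist_def by auto
  have KLt: "KL N (q t) (softmax N v) = - ln (softmax N v (st t))" if "t \<in> seqs N S" for t v
    using KL_point[OF pv[OF that] st[OF that]] .
  have nonneg: "d_KL N S p q f \<ge> 0" for f
    unfolding d_KL_def
  proof (intro sum_nonneg)
    fix t assume t: "t \<in> seqs N S"
    have "ln (softmax N (f t) (st t)) \<le> 0"
      using softmax_le1[OF st(1)[OF t]] by simp
    then show "0 \<le> p t * KL N (q t) (softmax N (f t))"
      using KLt[OF t] pn t by (auto intro!: mult_nonneg_nonpos)
  qed
  let ?F = "\<lambda>WE :: (nat \<Rightarrow> nat \<Rightarrow> real) \<times> (nat list \<Rightarrow> nat \<Rightarrow> real). d_KL N S p q (encoder d (fst WE) (snd WE))"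
  have bdd: "bdd_below (range ?F)" using nonneg by (intro bdd_belowI[of _ 0]) auto
  have ge: "d_KL_L N S d p q \<ge> 0"
    unfolding d_KL_L_def using nonneg by (intro cINF_greatest) auto
  have le: "d_KL_L N S d p q \<le> e" if e: "e > 0" for e
  proof -
    define c where "c = \<bar>ln (real N / e)\<bar>"
    have c0: "c \<ge> 0" unfolding c_def by simp
    have ec: "exp (- c) \<le> e / real N"
    proof -
      have "exp (- c) \<le> exp (- ln (real N / e))" unfolding c_def by simp
      also have "\<dots> = e / real N" using e assms(1) by (simp add: exp_minus)
      finally show ?thesis .
    qed
    define W :: "nat \<Rightarrow> nat \<Rightarrow> real" where
      "W i k = (if k = 1 then real i else if k = 2 then - ((real i)^2) else 0)" for i k
    define E :: "nat list \<Rightarrow> nat \<Rightarrow> real" where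
      "E t k = (if k = 1 then 2 * c * real (st t) else if k = 2 then c else 0)" for t k
    have enc: "encoder d W E t i = c * (real (st t))^2 - c * (real i - real (st t))^2" for t i
      unfolding encoder_def
      by (subst sum12[OF assms(3)]) (auto simp: W_def E_def power2_eq_square algebra_simps)
    have bound: "KL N (q t) (softmax N (encoder d W E t)) \<le> e" if t: "t \<in> seqs N S" for t
    proof -
      let ?s = "st t"
      let ?v = "encoder d W E t"
      have s: "?s \<in> {1..N}" using st[OF t] by simp
      have pos: "(\<Sum>j=1..N. exp (?v j)) > 0" using s by (intro sum_pos) auto
      have "(\<Sum>j=1..N. exp (?v j - ?v ?s)) = 1 + (\<Sum>j\<in>{1..N}-{?s}. exp (?v j - ?v ?s))"
        using s by (simp add: sum.remove)
      also have "(\<Sum>j\<in>{1..N}-{?s}. exp (?v j - ?v ?s)) \<le> (\<Sum>j\<in>{1..N}-{?s}. exp (- c))"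
      proof (intro sum_mono)
        fix j assume j: "j \<in> {1..N}-{?s}"
        have "(real j - real ?s)^2 \<ge> 1"
        proof -
          have "\<bar>real j - real ?s\<bar> \<ge> 1" using j by auto
          then show ?thesis by (metis abs_ge_zero abs_power2 one_le_power power2_abs)
        qed
        hence "c * (real j - real ?s)^2 \<ge> c" using c0 by (simp add: mult_le_cancel_left1)
        thus "exp (?v j - ?v ?s) \<le> exp (- c)" by (simp add: enc)
      qed
      also have "(\<Sum>j\<in>{1..N}-{?s}. exp (- c)) = (real N - 1) * exp (- c)"
        using s by (simp add: card_Diff_singleton of_nat_diff)
      finally have le1: "(\<Sum>j=1..N. exp (?v j - ?v ?s)) \<le> 1 + (real N - 1) * exp (- c)" by simp
      have "ln (\<Sum>j=1..N. exp (?v j - ?v ?s)) \<le> ln (1 + (real N - 1) * exp (- c))"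
        using le1 s by (intro ln_mono) (auto intro!: sum_pos)
      also have "\<dots> \<le> (real N - 1) * exp (- c)"
        using assms(1) by (intro ln_add_one_self_le_self) auto
      also have "\<dots> \<le> (real N - 1) * (e / real N)"
        using ec assms(1) by (intro mult_left_mono) auto
      also have "\<dots> \<le> e" using e assms(1) by (simp add: field_simps)
      finally have "ln (\<Sum>j=1..N. exp (?v j - ?v ?s)) \<le> e" .
      moreover have "(\<Sum>j=1..N. exp (?v j)) / exp (?v ?s) = (\<Sum>j=1..N. exp (?v j - ?v ?s))"
        by (simp add: sum_divide_distrib exp_diff)
      moreover have "- ln (softmax N ?v ?s) = ln ((\<Sum>j=1..N. exp (?v j)) / exp (?v ?s))"
        using pos unfolding softmax_def by (simp add: ln_div)
      ultimately show ?thesis using KLt[OF t] by simp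
    qed
    have "d_KL_L N S d p q \<le> ?F (W, E)"
      unfolding d_KL_L_def by (rule cINF_lower[OF bdd]) simp
    also have "\<dots> \<le> (\<Sum>t\<in>seqs N S. p t * e)"
      unfolding d_KL_def using bound pn by (auto intro!: sum_mono mult_left_mono)
    also have "\<dots> = e" using pn by (simp add: sum_distrib_right[symmetric])
    finally show ?thesis .
  qed
  have "d_KL_L N S d p q \<le> 0"
    using le by (meson dense not_le)
  with ge show ?thesis by simp
qed

end
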